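(* The sequence $(m_n)_{n\ge1}$ is strictly increasing. Consequently, if $T_1$ and $T_2$ are minimal trees, then $I(T_1)<I(T_2)$ if and only if $|T_1|<|T_2|$.
   Context: A rooted tree $T$ is a finite tree with a distinguished vertex, its root; its order $|T|$ is its number of vertices. For vertices $u,v$, the infimum of $u$ and $v$ is the vertex common to the path from $u$ to the root and the path from $v$ to the root that is furthest from the root. A set $X\subseteq V(T)$ is infima closed if the infimum of any two elements of $X$ lies in $X$. $I(T)$ denotes the number of nonempty infima closed subsets of $V(T)$. For $n\ge1$, $m_n=\min\{I(T): T \text{ a rooted tree with } n \text{ vertices}\}$; a rooted tree $T$ with $I(T)=m_{|T|}$ is called minimal. *)

theory Defs
  imports Main "HOL-Library.Sublist"
begin

text \<open>Vertices are addressed by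
  their position: the root is the empty list, and i # p is vertex p of the i-th subtree.
  The path from a vertex p to the root consists of the prefixes of p.\<close>

datatype rtree = Node "rtree list"

inductive is_vert :: "rtree \<Rightarrow> nat list \<Rightarrow> bool" where
  root: "is_vert t []"
| child: "i < length ts \<Longrightarrow> is_vert (ts ! i) p \<Longrightarrow> is_vert (Node ts) (i # p)"

definition verts :: "rtree \<Rightarrow> nat list set" where
  "verts t = {p. is_vert t p}"

definition order :: "rtree \<Rightarrow> nat" where
  "order t = card (verts t)"

text \<open>Infimum of two vertices: the common ancestor furthest from the root, i.e. the longest
  common prefix of their positions.\<close>
definition vinf :: "nat list \<Rightarrow> nat list \<Rightarrow> nat list" where
  "vinf u v = longest_common_prefix u v"

definition infima_closed :: "rtree \<Rightarrow> nat list set \<Rightarrow> bool" where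
  "infima_closed t X \<longleftrightarrow> X \<subseteq> verts t \<and> (\<forall>u\<in>X. \<forall>v\<in>X. vinf u v \<in> X)"

definition I :: "rtree \<Rightarrow> nat" where
  "I t = card {X. X \<noteq> {} \<and> infima_closed t X}"

definition m :: "nat \<Rightarrow> nat" where
  "m n = (INF t \<in> {t. order t = n}. I t)"

definition minimal :: "rtree \<Rightarrow> bool" where
  "minimal t \<longleftrightarrow> I t = m (order t)"

end

theory Submission
  imports Defs
begin

lemma is_vert_Node:
  "is_vert (Node ts) p \<longleftrightarrow> p = [] \<or> (\<exists>i q. p = i # q \<and> i < length ts \<and> is_vert (ts ! i) q)"
  by (auto elim: is_vert.cases intro: is_vert.intros)

lemma verts_Node:
  "verts (Node ts) = insert [] (\<Union>i<length ts. (Cons i) ` verts (ts ! i))"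
  unfolding verts_def by (auto simp: is_vert_Node) (metis imageI lessThan_iff mem_Collect_eq)

lemma finite_verts: "finite (verts t)"
proof (induction t)
  case (Node ts)
  then show ?case by (auto simp: verts_Node)
qed

lemma root_in_verts: "[] \<in> verts t"
  by (simp add: verts_def is_vert.root)

lemma size_last: "ts \<noteq> [] \<Longrightarrow> size (last ts) < Suc (size_list size ts)"
  proof -
  assume "ts \<noteq> []"
  then have "last ts \<in> set ts" by (rule last_in_set)
  then have "size (last ts) \<le> size_list size ts"
    by (rule size_list_estimation') (rule order_refl)
  then show ?thesis by simp
qed

function dl :: "rtree \<Rightarrow> rtree" where
  "dl (Node ts) = (if ts = [] then Node [] else if last ts = Node [] then Node (butlast ts)
      else Node (butlast ts @ [dl (last ts)]))"
  by pat_completeness auto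
termination by (relation "measure size") (auto simp: size_last)

function lastpath :: "rtree \<Rightarrow> nat list" where
  "lastpath (Node ts) = (if ts = [] then [] else (length ts - 1) # lastpath (last ts))"
  by pat_completeness auto
termination by (relation "measure size") (auto simp: size_last)

lemma lastpath_vert: "is_vert t (lastpath t)"
proof (induction t rule: lastpath.induct)
  case (1 ts)
  show ?case
  proof (cases "ts = []")
    case True then show ?thesis by (simp add: is_vert.root)
  next
    case False
    then have "last ts = ts ! (length ts - 1)" by (simp add: last_conv_nth)
    with False 1 show ?thesis by (auto simp: is_vert_Node)
  qed
qed

lemma dl_vert: "t \<noteq> Node [] \<Longrightarrow> is_vert (dl t) p \<longleftrightarrow> (is_vert t p \<and> p \<noteq> lastpath t)"
proof (induction t arbitrary: p rule: dl.induct)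
  case (1 ts)
  then have ne: "ts \<noteq> []" by auto
  define k where "k = length ts - 1"
  have lk: "last ts = ts ! k" using ne by (simp add: last_conv_nth k_def)
  have kl: "k < length ts" using ne by (simp add: k_def)
  show ?case
  proof (cases "last ts = Node []")
    case True
    have "is_vert (Node ts) p \<and> p \<noteq> lastpath (Node ts) \<longleftrightarrow>
          p = [] \<or> (\<exists>i q. p = i # q \<and> i < k \<and> is_vert (ts ! i) q)"
    proof
      assume a: "is_vert (Node ts) p \<and> p \<noteq> lastpath (Node ts)"
      show "p = [] \<or> (\<exists>i q. p = i # q \<and> i < k \<and> is_vert (ts ! i) q)"
      proof (cases p)
        case (Cons i q)
        with a have iq: "i < length ts" "is_vert (ts ! i) q" by (auto simp: is_vert_Node)
        have "i \<noteq> k"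
        proof
          assume "i = k"
          with iq True lk have "q = []" by (auto simp: is_vert_Node)
          with a Cons \<open>i = k\<close> ne True show False by (simp add: k_def)
        qed
        with iq kl Cons show ?thesis by (auto simp: k_def)
      qed simp
    next
      assume "p = [] \<or> (\<exists>i q. p = i # q \<and> i < k \<and> is_vert (ts ! i) q)"
      then show "is_vert (Node ts) p \<and> p \<noteq> lastpath (Node ts)"
        using ne kl by (auto simp: is_vert_Node k_def)
    qed
    moreover have "is_vert (dl (Node ts)) p \<longleftrightarrow>
          p = [] \<or> (\<exists>i q. p = i # q \<and> i < k \<and> is_vert (ts ! i) q)"
      using ne True by (auto simp: is_vert_Node k_def nth_butlast)
    ultimately show ?thesis by simp
  next
    case False
    have IH: "\<And>q. is_vert (dl (last ts)) q \<longleftrightarrow> (is_vert (last ts) q \<and> q \<noteq> lastpath (last ts))"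
      using 1(1) ne False by blast
    have dlt: "dl (Node ts) = Node (butlast ts @ [dl (last ts)])" using ne False by simp
    have nth1: "i < k \<Longrightarrow> (butlast ts @ [dl (last ts)]) ! i = ts ! i" for i
      using ne by (simp add: k_def nth_append nth_butlast)
    have nth2: "(butlast ts @ [dl (last ts)]) ! k = dl (last ts)"
      using ne by (simp add: k_def nth_append)
    have len: "length (butlast ts @ [dl (last ts)]) = length ts" using ne by simp
    show ?thesis
    proof (cases p)
      case Nil then show ?thesis using ne dlt by (simp add: is_vert_Node)
    next
      case (Cons i q)
      show ?thesis
      proof (cases "i = k")
        case True
        then show ?thesis using Cons dlt nth2 IH lk kl len ne by (auto simp: is_vert_Node k_def)
      next
        case False
        then have "i < length ts \<longleftrightarrow> i < k" using kl k_def by auto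
        then show ?thesis using Cons dlt nth1 len ne False by (auto simp: is_vert_Node k_def)
      qed
    qed
  qed
qed

lemma verts_dl: "t \<noteq> Node [] \<Longrightarrow> verts (dl t) = verts t - {lastpath t}"
  using dl_vert unfolding verts_def by auto

lemma order_dl: "t \<noteq> Node [] \<Longrightarrow> order (dl t) = order t - 1"
  unfolding order_def using verts_dl[of t] lastpath_vert[of t] finite_verts[of t]
  by (simp add: verts_def)

lemma vinf_self: "vinf u u = u"
  unfolding vinf_def by (induction u) auto

lemma I_dl: "t \<noteq> Node [] \<Longrightarrow> I (dl t) < I t"
proof -
  assume t: "t \<noteq> Node []"
  let ?S = "{X. X \<noteq> {} \<and> infima_closed t X}"
  let ?S' = "{X. X \<noteq> {} \<and> infima_closed (dl t) X}"
  have sub: "?S' \<subseteq> ?S" using verts_dl[OF t] unfolding infima_closed_def by auto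
  have "{lastpath t} \<in> ?S" using lastpath_vert[of t] vinf_self
    unfolding infima_closed_def verts_def by auto
  moreover have "{lastpath t} \<notin> ?S'" using verts_dl[OF t] unfolding infima_closed_def by auto
  ultimately have ps: "?S' \<subset> ?S" using sub by blast
  have "finite ?S"
    by (rule finite_subset[of _ "Pow (verts t)"]) (auto simp: infima_closed_def finite_verts)
  then show ?thesis unfolding I_def using ps psubset_card_mono by blast
qed

fun path :: "nat \<Rightarrow> rtree" where
  "path 0 = Node []"
| "path (Suc k) = Node [path k]"

lemma order_path: "order (path k) = Suc k"
proof (induction k)
  case 0 then show ?case by (simp add: order_def verts_Node)
next
  case (Suc k)
  have "verts (path (Suc k)) = insert [] ((Cons 0) ` verts (path k))" by (simp add: verts_Node lessThan_Suc)
  moreover have "[] \<notin> (Cons 0) ` verts (path k)" by auto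
  ultimately have "card (verts (path (Suc k))) = Suc (card (verts (path k)))"
    using finite_verts by (simp add: card_image)
  then show ?case using Suc by (simp add: order_def)
qed

lemma order_pos: "order t \<ge> 1"
  unfolding order_def using finite_verts root_in_verts
  by (metis One_nat_def Suc_leI card_gt_0_iff empty_iff)

lemma m_mem: "n \<ge> 1 \<Longrightarrow> \<exists>t. order t = n \<and> m n = I t"
proof -
  assume "n \<ge> 1"
  then obtain k where "n = Suc k" by (cases n) auto
  then have ne: "I ` {t. order t = n} \<noteq> {}" using order_path by auto
  have "Inf (I ` {t. order t = n}) \<in> I ` {t. order t = n}"
    using ne unfolding Inf_nat_def by (meson LeastI_ex ex_in_conv)
  then show ?thesis unfolding m_def by auto
qed

lemma m_le: "order t = n \<Longrightarrow> m n \<le> I t"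
  unfolding m_def by (rule cINF_lower) auto

lemma m_step: "n \<ge> 1 \<Longrightarrow> m n < m (Suc n)"
proof -
  assume n: "n \<ge> 1"
  obtain t where t: "order t = Suc n" "m (Suc n) = I t" using m_mem[of "Suc n"] by auto
  have "t \<noteq> Node []" using t n by (auto simp: order_def verts_Node)
  then have "order (dl t) = n" "I (dl t) < I t" using order_dl I_dl t by auto
  then show ?thesis using m_le[of "dl t" n] t by linarith
qed

lemma m_mono: "a \<ge> 1 \<Longrightarrow> a < b \<Longrightarrow> m a < m b"
proof (induction b)
  case 0 then show ?case by simp
next
  case (Suc b)
  show ?case
  proof (cases "a = b")
    case True then show ?thesis using m_step Suc by simp
  next
    case False
    then have "m a < m b" using Suc by simp
    moreover have "m b < m (Suc b)" using m_step Suc by simp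
    ultimately show ?thesis by simp
  qed
qed

theorem lemma2p2:
  shows "(\<forall>n\<ge>1. m n < m (Suc n)) \<and>
    (\<forall>T1 T2. minimal T1 \<and> minimal T2 \<longrightarrow> (I T1 < I T2 \<longleftrightarrow> order T1 < order T2))"
proof (intro conjI allI impI)
  show "\<And>n. n \<ge> 1 \<Longrightarrow> m n < m (Suc n)" by (rule m_step)
next
  fix T1 T2 assume "minimal T1 \<and> minimal T2"
  then have e: "I T1 = m (order T1)" "I T2 = m (order T2)" by (auto simp: minimal_def)
  show "I T1 < I T2 \<longleftrightarrow> order T1 < order T2"
  proof
    assume "I T1 < I T2"
    show "order T1 < order T2"
    proof (rule ccontr)
      assume "\<not> order T1 < order T2"
      then have "order T2 = order T1 \<or> order T2 < order T1" by auto
      then have "m (order T2) \<le> m (order T1)"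
        using m_mono[of "order T2" "order T1"] order_pos[of T2] by auto
      with e \<open>I T1 < I T2\<close> show False by simp
    qed
  next
    assume "order T1 < order T2"
    then show "I T1 < I T2" using m_mono order_pos e by simp
  qed
qed

end
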